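(* Let $\mathscr{A}$ be a Kripke structure, $a\in A$, and $k>0$. There is an $\mathbb{M}_k$-coalgebra $\alpha:(\mathscr{A},a)\to\mathbb{M}_k(\mathscr{A},a)$ if and only if the submodel generated by $a$ is a synchronization tree of height $\le k$.
   Context: Kripke structures: $\sigma$-structures with unary symbols $P$ and binary symbols $R_\alpha$; write $a\xrightarrow{\alpha}a'$ for $R_\alpha^{\mathscr{A}}(a,a')$. $\mathbb{M}_k(\mathscr{A},a)$: universe $[a]$ (the point) plus all $[a_0,\alpha_1,a_1,\dots,\alpha_j,a_j]$ with $a_0=a$, $1\le j\le k$, $a_i\xrightarrow{\alpha_{i+1}}a_{i+1}$; $P(s)$ iff $P^{\mathscr{A}}$ holds of the last element $\varepsilon(s)$; $R_\alpha(s,t)$ iff $t=s[\alpha,a']$. Comultiplication: $\delta[a_0,\alpha_1,a_1,\dots,\alpha_j,a_j]=[[a_0],\alpha_1,[a_0,\alpha_1,a_1],\dots,\alpha_j,[a_0,\alpha_1,\dots,\alpha_j,a_j]]$; functor action on a point-preserving homomorphism $h$: $\mathbb{M}_k h[a_0,\alpha_1,a_1,\dots]=[h(a_0),\alpha_1,h(a_1),\dots]$. A coalgebra is a point-preserving homomorphism $\alpha:(\mathscr{A},a)\to\mathbb{M}_k(\mathscr{A},a)$ with $\delta\circ\alpha=\mathbb{M}_k\alpha\circ\alpha$ and $\varepsilon\circ\alpha=\mathrm{id}$. The submodel generated by $a$ is the restriction of $\mathscr{A}$ to elements $a'$ reachable by a finite path $a\xrightarrow{\alpha_1}\cdots\xrightarrow{\alpha_m}a'$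 ($m\ge0$); it is a synchronization tree if each such $a'$ is reached by a unique such path, and its height is the maximum length of such a path.
   Formalization: The coalgebra $\alpha$ goes from the submodel generated by a, not from all of $\mathscr{A}$, to $\mathbb{M}_k(\mathscr{A},a)$, so $\varepsilon\circ\alpha=\mathrm{id}$ and the homomorphism conditions concern only elements reachable from a. The statement above fails without it. *)

theory Defs
  imports Main
begin

text \<open>A Kripke structure is given by a universe A :: 'a set, unary predicates
  P :: 'p => 'a => bool and binary relations R :: 'l => 'a => 'a => bool
  (R l x y means x --l--> y).\<close>

definition kripke :: "'a set \<Rightarrow> ('l \<Rightarrow> 'a \<Rightarrow> 'a \<Rightarrow> bool) \<Rightarrow> bool" where
  "kripke A R \<longleftrightarrow> (\<forall>l x y. R l x y \<longrightarrow> x \<in> A \<and> y \<in> A)"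

text \<open>A path [a0, l1, a1, ..., lj, aj] is represented as (a0, [(l1,a1),...,(lj,aj)]).\<close>

fun is_path :: "('l \<Rightarrow> 'a \<Rightarrow> 'a \<Rightarrow> bool) \<Rightarrow> 'a \<Rightarrow> ('l \<times> 'a) list \<Rightarrow> bool" where
  "is_path R x [] = True"
| "is_path R x ((l, y) # ps) = (R l x y \<and> is_path R y ps)"

definition eps :: "'a \<times> ('l \<times> 'a) list \<Rightarrow> 'a" where
  "eps s = (if snd s = [] then fst s else snd (last (snd s)))"

definition Mk_univ :: "nat \<Rightarrow> ('l \<Rightarrow> 'a \<Rightarrow> 'a \<Rightarrow> bool) \<Rightarrow> 'a \<Rightarrow> ('a \<times> ('l \<times> 'a) list) set" where
  "Mk_univ k R a = {(a, ps) | ps. is_path R a ps \<and> length ps \<le> k}"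

definition Mk_P :: "('p \<Rightarrow> 'a \<Rightarrow> bool) \<Rightarrow> 'p \<Rightarrow> 'a \<times> ('l \<times> 'a) list \<Rightarrow> bool" where
  "Mk_P P p s \<longleftrightarrow> P p (eps s)"

definition Mk_R :: "nat \<Rightarrow> ('l \<Rightarrow> 'a \<Rightarrow> 'a \<Rightarrow> bool) \<Rightarrow> 'a \<Rightarrow> 'l
     \<Rightarrow> 'a \<times> ('l \<times> 'a) list \<Rightarrow> 'a \<times> ('l \<times> 'a) list \<Rightarrow> bool" where
  "Mk_R k R a l s t \<longleftrightarrow> s \<in> Mk_univ k R a \<and> t \<in> Mk_univ k R a \<and>
     (\<exists>a'. t = (fst s, snd s @ [(l, a')]))"

definition hom :: "'a set \<Rightarrow> ('p \<Rightarrow> 'a \<Rightarrow> bool) \<Rightarrow> ('l \<Rightarrow> 'a \<Rightarrow> 'a \<Rightarrow> bool)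
    \<Rightarrow> 'b set \<Rightarrow> ('p \<Rightarrow> 'b \<Rightarrow> bool) \<Rightarrow> ('l \<Rightarrow> 'b \<Rightarrow> 'b \<Rightarrow> bool) \<Rightarrow> ('a \<Rightarrow> 'b) \<Rightarrow> bool" where
  "hom A P R B Q S f \<longleftrightarrow> (\<forall>x\<in>A. f x \<in> B) \<and>
     (\<forall>p. \<forall>x\<in>A. P p x \<longrightarrow> Q p (f x)) \<and>
     (\<forall>l. \<forall>x\<in>A. \<forall>y\<in>A. R l x y \<longrightarrow> S l (f x) (f y))"

definition delta :: "'a \<times> ('l \<times> 'a) list \<Rightarrow>
    ('a \<times> ('l \<times> 'a) list) \<times> ('l \<times> ('a \<times> ('l \<times> 'a) list)) list" where
  "delta s = ((fst s, []),
     map (\<lambda>i. (fst (snd s ! i), (fst s, take (Suc i) (snd s)))) [0..<length (snd s)])"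

definition Mk_map :: "('a \<Rightarrow> 'b) \<Rightarrow> 'a \<times> ('l \<times> 'a) list \<Rightarrow> 'b \<times> ('l \<times> 'b) list" where
  "Mk_map h s = (h (fst s), map (\<lambda>(l, y). (l, h y)) (snd s))"

text \<open>Paths from a ending in a'; the submodel generated by a consists of such a'.\<close>
definition path_to :: "('l \<Rightarrow> 'a \<Rightarrow> 'a \<Rightarrow> bool) \<Rightarrow> 'a \<Rightarrow> ('l \<times> 'a) list \<Rightarrow> 'a \<Rightarrow> bool" where
  "path_to R a ps a' \<longleftrightarrow> is_path R a ps \<and> eps (a, ps) = a'"

definition reachable :: "('l \<Rightarrow> 'a \<Rightarrow> 'a \<Rightarrow> bool) \<Rightarrow> 'a \<Rightarrow> 'a set" where
  "reachable R a = {a'. \<exists>ps. path_to R a ps a'}"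

definition sync_tree :: "('l \<Rightarrow> 'a \<Rightarrow> 'a \<Rightarrow> bool) \<Rightarrow> 'a \<Rightarrow> bool" where
  "sync_tree R a \<longleftrightarrow> (\<forall>a'\<in>reachable R a. \<exists>!ps. path_to R a ps a')"

definition height_le :: "('l \<Rightarrow> 'a \<Rightarrow> 'a \<Rightarrow> bool) \<Rightarrow> 'a \<Rightarrow> nat \<Rightarrow> bool" where
  "height_le R a k \<longleftrightarrow> (\<forall>ps. is_path R a ps \<longrightarrow> length ps \<le> k)"

text \<open>Since M_k(A,a) and every
  coalgebra condition only concern the part of A reachable from the point a, the
  coalgebra is taken on the submodel generated by a.\<close>
definition Mk_coalgebra :: "nat \<Rightarrow> 'a set \<Rightarrow> ('p \<Rightarrow> 'a \<Rightarrow> bool) \<Rightarrow> ('l \<Rightarrow> 'a \<Rightarrow> 'a \<Rightarrow> bool)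
    \<Rightarrow> 'a \<Rightarrow> ('a \<Rightarrow> 'a \<times> ('l \<times> 'a) list) \<Rightarrow> bool" where
  "Mk_coalgebra k A P R a \<alpha> \<longleftrightarrow>
     (let G = A \<inter> reachable R a in
     hom G P R (Mk_univ k R a) (Mk_P P) (Mk_R k R a) \<alpha> \<and>
     \<alpha> a = (a, []) \<and>
     (\<forall>x\<in>G. delta (\<alpha> x) = Mk_map \<alpha> (\<alpha> x)) \<and>
     (\<forall>x\<in>G. eps (\<alpha> x) = x))"

end

theory Submission
  imports Defs
begin

lemma eps_cons[simp]: "eps (x, (l,z)#ps) = eps (z, ps)"
  by (simp add: eps_def)

lemma eps_nil[simp]: "eps (x, []) = x"
  by (simp add: eps_def)

lemma eps_snoc[simp]: "eps (x, ps @ [(l,y)]) = y"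
  by (simp add: eps_def)

lemma is_path_append: "is_path R x (xs @ ys) \<longleftrightarrow> is_path R x xs \<and> is_path R (eps (x, xs)) ys"
  by (induction xs arbitrary: x) auto

lemma is_path_snoc: "is_path R x (ps @ [(l,y)]) \<longleftrightarrow> is_path R x ps \<and> R l (eps (x, ps)) y"
  by (simp add: is_path_append)

lemma reach_in_A:
  assumes "kripke A R" "a \<in> A" "is_path R a ps"
  shows "eps (a, ps) \<in> A"
proof (cases ps rule: rev_exhaust)
  case Nil then show ?thesis using assms by simp
next
  case (snoc qs p)
  then obtain l y where p: "p = (l,y)" by (cases p)
  with snoc assms(3) have "R l (eps (a, qs)) y" by (simp add: is_path_snoc)
  with assms(1) show ?thesis using snoc p by (simp add: kripke_def)
qed

lemma G_eq:
  assumes "kripke A R" "a \<in> A"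
  shows "A \<inter> reachable R a = reachable R a"
  using reach_in_A[OF assms] by (auto simp: reachable_def path_to_def)

lemma path_reach: "is_path R a ps \<Longrightarrow> eps (a, ps) \<in> reachable R a"
  by (auto simp: reachable_def path_to_def)

lemma alpha_path:
  assumes hom: "hom (reachable R a) P R (Mk_univ k R a) (Mk_P P) (Mk_R k R a) \<alpha>"
    and a0: "\<alpha> a = (a, [])"
    and ep: "\<forall>x\<in>reachable R a. eps (\<alpha> x) = x"
  shows "is_path R a ps \<Longrightarrow> \<alpha> (eps (a, ps)) = (a, ps)"
proof (induction ps rule: rev_induct)
  case Nil then show ?case using a0 by simp
next
  case (snoc p qs)
  obtain l y where p: "p = (l,y)" by (cases p)
  from snoc.prems p have pq: "is_path R a qs" and r: "R l (eps (a, qs)) y"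
    by (auto simp: is_path_snoc)
  have ih: "\<alpha> (eps (a, qs)) = (a, qs)" using snoc.IH pq by simp
  have x: "eps (a, qs) \<in> reachable R a" using path_reach[OF pq] .
  have yr: "y \<in> reachable R a" using path_reach[OF snoc.prems] p by simp
  from hom x yr r have "Mk_R k R a l (\<alpha> (eps (a, qs))) (\<alpha> y)"
    unfolding hom_def by blast
  then obtain a' where "\<alpha> y = (a, qs @ [(l, a')])"
    using ih unfolding Mk_R_def by auto
  moreover have "eps (\<alpha> y) = y" using ep yr by blast
  ultimately have "\<alpha> y = (a, qs @ [(l, y)])" by simp
  then show ?case using p by simp
qed

theorem mainTheorem15:
  fixes A :: "'a set" and P :: "'p \<Rightarrow> 'a \<Rightarrow> bool" and R :: "'l \<Rightarrow> 'a \<Rightarrow> 'a \<Rightarrow> bool"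
    and a :: 'a and k :: nat
  assumes "kripke A R" and "a \<in> A" and "k > 0"
  shows "(\<exists>\<alpha>. Mk_coalgebra k A P R a \<alpha>) \<longleftrightarrow> (sync_tree R a \<and> height_le R a k)"
proof
  assume "\<exists>\<alpha>. Mk_coalgebra k A P R a \<alpha>"
  then obtain \<alpha> where c: "Mk_coalgebra k A P R a \<alpha>" by blast
  have hom: "hom (reachable R a) P R (Mk_univ k R a) (Mk_P P) (Mk_R k R a) \<alpha>"
    and a0: "\<alpha> a = (a, [])" and ep: "\<forall>x\<in>reachable R a. eps (\<alpha> x) = x"
    using c G_eq[OF assms(1,2)] by (auto simp: Mk_coalgebra_def Let_def)
  note ap = alpha_path[OF hom a0 ep]
  have h: "height_le R a k"
    unfolding height_le_def
  proof (intro allI impI)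
    fix ps assume p: "is_path R a ps"
    have "\<alpha> (eps (a, ps)) \<in> Mk_univ k R a"
      using hom path_reach[OF p] unfolding hom_def by blast
    then show "length ps \<le> k" using ap[OF p] by (simp add: Mk_univ_def)
  qed
  have "sync_tree R a"
    unfolding sync_tree_def
  proof
    fix x assume "x \<in> reachable R a"
    then obtain ps where ps: "path_to R a ps x" by (auto simp: reachable_def)
    show "\<exists>!ps. path_to R a ps x"
    proof (rule ex1I[of _ ps])
      show "path_to R a ps x" by fact
      fix qs assume "path_to R a qs x"
      then have q: "is_path R a qs" "eps (a, qs) = x" by (auto simp: path_to_def)
      have "\<alpha> x = (a, qs)" using ap[OF q(1)] q(2) by simp
      moreover have "\<alpha> x = (a, ps)" using ps ap unfolding path_to_def by auto
      ultimately show "qs = ps" by simp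
    qed
  qed
  with h show "sync_tree R a \<and> height_le R a k" by blast
next
  assume st: "sync_tree R a \<and> height_le R a k"
  define \<alpha> where "\<alpha> x = (a, THE ps. path_to R a ps x)" for x
  have uniq: "\<alpha> x = (a, ps)" if "is_path R a ps" "eps (a, ps) = x" for ps x
  proof -
    have pt: "path_to R a ps x" using that by (simp add: path_to_def)
    then have "x \<in> reachable R a" by (auto simp: reachable_def)
    then have "\<exists>!ps. path_to R a ps x" using st by (simp add: sync_tree_def)
    then have "(THE ps. path_to R a ps x) = ps" using pt by (blast intro: the1_equality)
    then show ?thesis by (simp add: \<alpha>_def)
  qed
  have rp: "\<exists>ps. is_path R a ps \<and> eps (a, ps) = x \<and> \<alpha> x = (a, ps)" if xr: "x \<in> reachable R a" for x
  proof -
    obtain ps where "is_path R a ps" "eps (a, ps) = x" using xr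
      by (auto simp: reachable_def path_to_def)
    then show ?thesis using uniq by blast
  qed
  have univ: "\<alpha> x \<in> Mk_univ k R a" if "x \<in> reachable R a" for x
    using rp[OF that] st by (auto simp: Mk_univ_def height_le_def)
  have hom: "hom (reachable R a) P R (Mk_univ k R a) (Mk_P P) (Mk_R k R a) \<alpha>"
    unfolding hom_def
  proof (intro conjI ballI allI impI)
    fix x assume "x \<in> reachable R a" then show "\<alpha> x \<in> Mk_univ k R a" by (rule univ)
  next
    fix p x assume "x \<in> reachable R a" "P p x"
    then show "Mk_P P p (\<alpha> x)" using rp by (force simp: Mk_P_def)
  next
    fix l x y assume xr: "x \<in> reachable R a" and yr: "y \<in> reachable R a" and r: "R l x y"
    obtain ps where ps: "is_path R a ps" "eps (a, ps) = x" "\<alpha> x = (a, ps)" using rp[OF xr] by blast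
    have "is_path R a (ps @ [(l,y)])" using ps r by (simp add: is_path_snoc)
    then have "\<alpha> y = (a, ps @ [(l,y)])" using uniq by simp
    then show "Mk_R k R a l (\<alpha> x) (\<alpha> y)"
      using univ[OF xr] univ[OF yr] ps(3) by (auto simp: Mk_R_def)
  qed
  have a0: "\<alpha> a = (a, [])" using uniq[of "[]" a] by simp
  have del: "delta (\<alpha> x) = Mk_map \<alpha> (\<alpha> x)" if xr: "x \<in> reachable R a" for x
  proof -
    obtain ps where ps: "is_path R a ps" "eps (a, ps) = x" "\<alpha> x = (a, ps)" using rp[OF xr] by blast
    have "\<alpha> (snd (ps ! i)) = (a, take (Suc i) ps)" if i: "i < length ps" for i
    proof (rule uniq)
      have e: "take (Suc i) ps = take i ps @ [ps ! i]" using i by (simp add: take_Suc_conv_app_nth)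
      have "is_path R a (take (Suc i) ps @ drop (Suc i) ps)" using ps(1) by simp
      then show "is_path R a (take (Suc i) ps)" by (simp only: is_path_append)
      show "eps (a, take (Suc i) ps) = snd (ps ! i)" unfolding e
        by (cases "ps ! i") simp
    qed
    then show ?thesis using ps(3) a0
      by (auto simp: delta_def Mk_map_def intro!: nth_equalityI split: prod.split) (metis snd_conv)
  qed
  have "Mk_coalgebra k A P R a \<alpha>"
    unfolding Mk_coalgebra_def Let_def G_eq[OF assms(1,2)]
    using hom a0 del rp by (metis (no_types, lifting))
  then show "\<exists>\<alpha>. Mk_coalgebra k A P R a \<alpha>" by blast
qed

end
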